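(* Let $\alpha$ be a regular cardinal, let $e_X:P\to X$ be an $\alpha$-supported meet-extension, let $Q$ be a poset and $f:P\to Q$ an order-preserving map. Define a partial map $f_X:X\to Q$ by $f_X(x)=\bigwedge f[e_X^{-1}(x^\uparrow)]$ when this meet exists in $Q$, and undefined otherwise; let $\mathrm{dom}(f_X)$ be its domain, with the order inherited from $X$. Then: (1) $f_X$ is order-preserving, $e_X[P]\subseteq\mathrm{dom}(f_X)$, and $f_X\circ e_X=f$. (2) Suppose $f$ is $(\alpha,e_X)$-continuous. Then: (a) if $Z\subseteq\mathrm{dom}(f_X)$ with $|Z|<\alpha$, $\bigwedge Z$ exists in $X$, and $Z$ has a greatest lower bound $b$ in $\mathrm{dom}(f_X)$, then $b=\bigwedge Z$; (b) $f_X$ is $\alpha$-meet-preserving on $\mathrm{dom}(f_X)$, i.e. whenever $Z\subseteq\mathrm{dom}(f_X)$ with $|Z|<\alpha$ has a greatest lower bound $b$ in $\mathrm{dom}(f_X)$, then $f_X(b)=\bigwedge f_X[Z]$ in $Q$; (c) if $g:X\to Q$ is a partial map whose domain contains $e_X[P]$, which is $\alpha$-meet-preserving on its domain (i.e. whenever $Z\subseteq\mathrm{dom}(g)$, $|Z|<\alpha$, has a greatest lower bound $b$ in $\mathrm{dom}(g)$, then $g(b)=\bigwedge g[Z]$), and which satisfies $g\circ e_X=f$, then $g(x)=f_X(x)$ for all $x\in\mathrm{dom}(f_X)\cap\mathrm{dom}(g)$.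
   Context: For $q$ in a poset, $q^\uparrow=\{q'\ge q\}$; for $S\subseteq P$, $S^\uparrow=\{p:p\ge s\text{ for some }s\in S\}$; $e^{-1}(Z)=\{p:e(p)\in Z\}$. A meet-extension is an order-embedding $e:P\to X$ with $x=\bigwedge e[e^{-1}(x^\uparrow)]$ for all $x\in X$. It is $\alpha$-supported if for every $x\in X$ there is $S\subseteq P$ with $|S|<\alpha$ and $x=\bigwedge e_X[S]$. An order-preserving $f:P\to Q$ is $(\alpha,e_X)$-continuous if for all $q\in Q$ and all $S\subseteq f^{-1}(q^\uparrow)$ with $|S|<\alpha$ there are $q_S\in Q$, $x_S\in X$ with $\bigwedge f[S]=q_S=\bigwedge f[e_X^{-1}(x_S^\uparrow)]$ and $S^\uparrow\subseteq e_X^{-1}(x_S^\uparrow)$. *)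

theory Defs
  imports Main
begin

definition is_meet_in :: "'a::order set \<Rightarrow> 'a set \<Rightarrow> 'a \<Rightarrow> bool" where
  "is_meet_in S A m \<longleftrightarrow> m \<in> A \<and> (\<forall>s\<in>S. m \<le> s) \<and>
     (\<forall>l\<in>A. (\<forall>s\<in>S. l \<le> s) \<longrightarrow> l \<le> m)"

abbreviation is_meet :: "'a::order set \<Rightarrow> 'a \<Rightarrow> bool" where
  "is_meet S m \<equiv> is_meet_in S UNIV m"

definition up_set :: "'a::order set \<Rightarrow> 'a set" where
  "up_set S = {p. \<exists>s\<in>S. s \<le> p}"

definition order_embedding :: "('a::order \<Rightarrow> 'b::order) \<Rightarrow> bool" where
  "order_embedding e \<longleftrightarrow> (\<forall>x y. x \<le> y \<longleftrightarrow> e x \<le> e y)"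

definition meet_extension :: "('p::order \<Rightarrow> 'x::order) \<Rightarrow> bool" where
  "meet_extension e \<longleftrightarrow> order_embedding e \<and>
     (\<forall>x. is_meet (e ` (e -` {x..})) x)"

text \<open>alpha is given as a cardinal (well-order relation) r; |S| < alpha is ordLess2 (card_of S) r.\<close>
definition supported :: "'c rel \<Rightarrow> ('p::order \<Rightarrow> 'x::order) \<Rightarrow> bool" where
  "supported r e \<longleftrightarrow> (\<forall>x. \<exists>S. ordLess2 (card_of S) r \<and> is_meet (e ` S) x)"

definition continuous_wrt :: "'c rel \<Rightarrow> ('p::order \<Rightarrow> 'x::order) \<Rightarrow> ('p \<Rightarrow> 'q::order) \<Rightarrow> bool" where
  "continuous_wrt r e f \<longleftrightarrow> (\<forall>q S. S \<subseteq> f -` {q..} \<and> ordLess2 (card_of S) r \<longrightarrow>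
     (\<exists>qS xS. is_meet (f ` S) qS \<and> is_meet (f ` (e -` {xS..})) qS \<and>
              up_set S \<subseteq> e -` {xS..}))"

definition ext_map :: "('p::order \<Rightarrow> 'x::order) \<Rightarrow> ('p \<Rightarrow> 'q::order) \<Rightarrow> 'x \<Rightarrow> 'q option" where
  "ext_map e f x = (if \<exists>m. is_meet (f ` (e -` {x..})) m
                     then Some (THE m. is_meet (f ` (e -` {x..})) m) else None)"

definition order_preserving_on :: "'x::order set \<Rightarrow> ('x \<Rightarrow> 'q::order option) \<Rightarrow> bool" where
  "order_preserving_on D g \<longleftrightarrow> (\<forall>x\<in>D. \<forall>y\<in>D. x \<le> y \<longrightarrow> the (g x) \<le> the (g y))"

definition meet_preserving :: "'c rel \<Rightarrow> ('x::order \<Rightarrow> 'q::order option) \<Rightarrow> bool" where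
  "meet_preserving r g \<longleftrightarrow> (\<forall>Z b. Z \<subseteq> dom g \<and> ordLess2 (card_of Z) r \<and> is_meet_in Z (dom g) b \<longrightarrow>
      is_meet ((the \<circ> g) ` Z) (the (g b)))"

end

theory Submission imports Defs begin

lemma meet_unique: "is_meet S a \<Longrightarrow> is_meet S b \<Longrightarrow> a = (b::'a::order)"
  unfolding is_meet_in_def by (meson order_antisym UNIV_I)

lemma is_meetI: "(\<forall>s\<in>S. m \<le> s) \<Longrightarrow> (\<And>l. \<forall>s\<in>S. l \<le> s \<Longrightarrow> l \<le> m) \<Longrightarrow> is_meet S m"
  unfolding is_meet_in_def by auto

lemma is_meetD1: "is_meet S m \<Longrightarrow> s \<in> S \<Longrightarrow> m \<le> s"
  unfolding is_meet_in_def by auto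

lemma is_meetD2: "is_meet S m \<Longrightarrow> \<forall>s\<in>S. l \<le> s \<Longrightarrow> l \<le> m"
  unfolding is_meet_in_def by auto

lemma ext_map_Some: "is_meet (f ` (e -` {x..})) m \<Longrightarrow> ext_map e f x = Some m"
  unfolding ext_map_def using meet_unique by (auto intro!: the_equality)

lemma ext_map_dom: "x \<in> dom (ext_map e f) \<Longrightarrow> is_meet (f ` (e -` {x..})) (the (ext_map e f x))"
proof -
  assume "x \<in> dom (ext_map e f)"
  then obtain m where m: "is_meet (f ` (e -` {x..})) m" unfolding ext_map_def by (auto split: if_splits)
  then show ?thesis using ext_map_Some[OF m] meet_unique by simp
qed

lemma ext_map_domI: "is_meet (f ` (e -` {x..})) m \<Longrightarrow> x \<in> dom (ext_map e f)"
  using ext_map_Some by blast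

lemma ext_map_mono: "x \<in> dom (ext_map e f) \<Longrightarrow> y \<in> dom (ext_map e f) \<Longrightarrow> x \<le> y
   \<Longrightarrow> the (ext_map e f x) \<le> the (ext_map e f y)"
  apply (drule ext_map_dom)+
  apply (erule is_meetD2)
  by (auto intro: is_meetD1 order_trans)

lemma ext_map_e:
  assumes "order_embedding e" "mono f"
  shows "ext_map e f (e p) = Some (f p)"
proof (rule ext_map_Some, rule is_meetI)
  show "\<forall>s\<in>f ` (e -` {e p..}). f p \<le> s" using assms unfolding order_embedding_def mono_def by auto
  show "\<And>l. \<forall>s\<in>f ` (e -` {e p..}). l \<le> s \<Longrightarrow> l \<le> f p" by auto
qed

lemma core:
  assumes reg: "Cinfinite r" "regularCard r"
    and supp: "supported r e"
    and cont: "continuous_wrt r e f"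
    and Zd: "Z \<subseteq> dom (ext_map e f)" and Zc: "ordLess2 (card_of Z) r"
    and bd: "b \<in> dom (ext_map e f)" and blb: "\<forall>z\<in>Z. b \<le> z"
  shows "\<exists>S xS qS. (\<forall>s\<in>S. \<exists>z\<in>Z. z \<le> e s) \<and> (\<forall>l. (\<forall>s\<in>S. l \<le> e s) \<longrightarrow> (\<forall>z\<in>Z. l \<le> z))
     \<and> is_meet (f ` S) qS \<and> is_meet (f ` (e -` {xS..})) qS \<and> (\<forall>s\<in>S. xS \<le> e s)
     \<and> (\<forall>s\<in>S. the (ext_map e f b) \<le> f s)"
proof -
  from supp obtain Sf where Sf: "\<And>z. ordLess2 (card_of (Sf z)) r \<and> is_meet (e ` Sf z) z"
    unfolding supported_def by metis
  define S where "S = (\<Union>z\<in>Z. Sf z)"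
  have Sc: "ordLess2 (card_of S) r" unfolding S_def
    using regularCard_UNION_bound[OF reg Zc] Sf by blast
  have A: "\<forall>s\<in>S. \<exists>z\<in>Z. z \<le> e s" unfolding S_def using Sf is_meetD1 by fastforce
  have B: "\<forall>l. (\<forall>s\<in>S. l \<le> e s) \<longrightarrow> (\<forall>z\<in>Z. l \<le> z)"
  proof (intro allI impI ballI)
    fix l z assume l: "\<forall>s\<in>S. l \<le> e s" and z: "z \<in> Z"
    show "l \<le> z" using is_meetD2[OF conjunct2[OF Sf[of z]]] l z unfolding S_def by blast
  qed
  have C: "\<forall>s\<in>S. the (ext_map e f b) \<le> f s"
  proof
    fix s assume "s \<in> S"
    then obtain z where z: "z \<in> Z" "z \<le> e s" using A by blast
    have "the (ext_map e f b) \<le> the (ext_map e f z)"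
      using ext_map_mono[OF bd _ blb[rule_format, OF z(1)]] Zd z by blast
    also have "\<dots> \<le> f s" using ext_map_dom[of z e f] Zd z by (auto intro: is_meetD1)
    finally show "the (ext_map e f b) \<le> f s" .
  qed
  have "S \<subseteq> f -` {the (ext_map e f b)..}" using C by auto
  then obtain qS xS where q: "is_meet (f ` S) qS" "is_meet (f ` (e -` {xS..})) qS"
     "up_set S \<subseteq> e -` {xS..}"
    using cont Sc unfolding continuous_wrt_def by blast
  have "\<forall>s\<in>S. xS \<le> e s" using q(3) unfolding up_set_def by auto
  then show ?thesis using A B C q by blast
qed

theorem proposition7p4:
  fixes r :: "'c rel"
    and e :: "'p::order \<Rightarrow> 'x::order"
    and f :: "'p \<Rightarrow> 'q::order"
  assumes reg: "Cinfinite r" "regularCard r"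
    and ext: "meet_extension e"
    and supp: "supported r e"
    and mono_f: "mono f"
  shows "order_preserving_on (dom (ext_map e f)) (ext_map e f)
         \<and> range e \<subseteq> dom (ext_map e f)
         \<and> (\<forall>p. ext_map e f (e p) = Some (f p))
         \<and> (continuous_wrt r e f \<longrightarrow>
           (\<forall>Z b. Z \<subseteq> dom (ext_map e f) \<and> ordLess2 (card_of Z) r \<and> (\<exists>m. is_meet Z m)
                  \<and> is_meet_in Z (dom (ext_map e f)) b \<longrightarrow> is_meet Z b)
         \<and> meet_preserving r (ext_map e f)
         \<and> (\<forall>g :: 'x \<Rightarrow> 'q option. range e \<subseteq> dom g \<and> meet_preserving r g
                \<and> (\<forall>p. g (e p) = Some (f p)) \<longrightarrow>
                (\<forall>x \<in> dom (ext_map e f) \<inter> dom g. g x = ext_map e f x)))"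
proof -
  have emb: "order_embedding e" using ext unfolding meet_extension_def by blast
  have P1: "order_preserving_on (dom (ext_map e f)) (ext_map e f)"
    unfolding order_preserving_on_def using ext_map_mono by blast
  have P3: "\<forall>p. ext_map e f (e p) = Some (f p)" using ext_map_e[OF emb mono_f] by blast
  have P2: "range e \<subseteq> dom (ext_map e f)" using P3 by blast
  have P4: "continuous_wrt r e f \<longrightarrow>
           (\<forall>Z b. Z \<subseteq> dom (ext_map e f) \<and> ordLess2 (card_of Z) r \<and> (\<exists>m. is_meet Z m)
                  \<and> is_meet_in Z (dom (ext_map e f)) b \<longrightarrow> is_meet Z b)
         \<and> meet_preserving r (ext_map e f)
         \<and> (\<forall>g :: 'x \<Rightarrow> 'q option. range e \<subseteq> dom g \<and> meet_preserving r g
                \<and> (\<forall>p. g (e p) = Some (f p)) \<longrightarrow>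
                (\<forall>x \<in> dom (ext_map e f) \<inter> dom g. g x = ext_map e f x))"
  proof
    assume cont: "continuous_wrt r e f"
    have A: "is_meet Z b" if Zd: "Z \<subseteq> dom (ext_map e f)" and Zc: "ordLess2 (card_of Z) r"
      and m: "is_meet Z m" and b: "is_meet_in Z (dom (ext_map e f)) b" for Z b m
    proof -
      have bd: "b \<in> dom (ext_map e f)" and blb: "\<forall>z\<in>Z. b \<le> z"
        using b unfolding is_meet_in_def by auto
      obtain S xS qS where A: "\<forall>s\<in>S. \<exists>z\<in>Z. z \<le> e s" and B: "\<forall>l. (\<forall>s\<in>S. l \<le> e s) \<longrightarrow> (\<forall>z\<in>Z. l \<le> z)"
        and q1: "is_meet (f ` S) qS" and q2: "is_meet (f ` (e -` {xS..})) qS" and xs: "\<forall>s\<in>S. xS \<le> e s"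
        using core[OF reg supp cont Zd Zc bd blb] by blast
      have xm: "xS \<le> m" using B xs is_meetD2[OF m] by blast
      have mS: "\<forall>s\<in>S. m \<le> e s" using A is_meetD1[OF m] order_trans by blast
      have "is_meet (f ` (e -` {m..})) qS"
      proof (rule is_meetI)
        show "\<forall>s\<in>f ` e -` {m..}. qS \<le> s" using q2 xm by (auto intro: is_meetD1 order_trans)
        show "l \<le> qS" if "\<forall>s\<in>f ` e -` {m..}. l \<le> s" for l
          using that mS by (intro is_meetD2[OF q1]) blast
      qed
      then have md: "m \<in> dom (ext_map e f)" by (rule ext_map_domI)
      have "m \<le> b" using b md is_meetD1[OF m] unfolding is_meet_in_def by blast
      moreover have "b \<le> m" using blb is_meetD2[OF m] by blast
      ultimately show ?thesis using m by simp
    qed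
    have B: "meet_preserving r (ext_map e f)" unfolding meet_preserving_def
    proof (intro allI impI, elim conjE)
      fix Z b assume Zd: "Z \<subseteq> dom (ext_map e f)" and Zc: "ordLess2 (card_of Z) r"
        and b: "is_meet_in Z (dom (ext_map e f)) b"
      have bd: "b \<in> dom (ext_map e f)" and blb: "\<forall>z\<in>Z. b \<le> z"
        using b unfolding is_meet_in_def by auto
      obtain S xS qS where A: "\<forall>s\<in>S. \<exists>z\<in>Z. z \<le> e s" and B: "\<forall>l. (\<forall>s\<in>S. l \<le> e s) \<longrightarrow> (\<forall>z\<in>Z. l \<le> z)"
        and q1: "is_meet (f ` S) qS" and q2: "is_meet (f ` (e -` {xS..})) qS" and xs: "\<forall>s\<in>S. xS \<le> e s"
        and C: "\<forall>s\<in>S. the (ext_map e f b) \<le> f s"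
        using core[OF reg supp cont Zd Zc bd blb] by blast
      have xd: "xS \<in> dom (ext_map e f)" and xv: "ext_map e f xS = Some qS"
        using ext_map_domI[OF q2] ext_map_Some[OF q2] by auto
      have "xS \<le> b" using b xd B xs unfolding is_meet_in_def by blast
      then have "qS \<le> the (ext_map e f b)" using ext_map_mono[OF xd bd] xv by fastforce
      moreover have "the (ext_map e f b) \<le> qS" using C by (intro is_meetD2[OF q1]) blast
      ultimately have bq: "the (ext_map e f b) = qS" by simp
      show "is_meet ((the \<circ> ext_map e f) ` Z) (the (ext_map e f b))"
      proof (rule is_meetI)
        show "\<forall>s\<in>(the \<circ> ext_map e f) ` Z. the (ext_map e f b) \<le> s"
          using ext_map_mono[OF bd] blb Zd by (simp add: subset_iff)
        show "l \<le> the (ext_map e f b)" if l: "\<forall>s\<in>(the \<circ> ext_map e f) ` Z. l \<le> s" for l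
        proof -
          have "\<forall>s\<in>S. l \<le> f s"
          proof
            fix s assume "s \<in> S"
            then obtain z where z: "z \<in> Z" "z \<le> e s" using A by blast
            have "l \<le> the (ext_map e f z)" using l z by auto
            also have "\<dots> \<le> f s" using ext_map_dom[of z e f] Zd z by (auto intro: is_meetD1)
            finally show "l \<le> f s" .
          qed
          then show ?thesis unfolding bq by (intro is_meetD2[OF q1]) blast
        qed
      qed
    qed
    have C: "g x = ext_map e f x" if g: "range e \<subseteq> dom g" "meet_preserving r g" "\<forall>p. g (e p) = Some (f p)"
      and x: "x \<in> dom (ext_map e f) \<inter> dom g" for g :: "'x \<Rightarrow> 'q option" and x
    proof -
      from supp obtain S where Sc: "ordLess2 (card_of S) r" and Sm: "is_meet (e ` S) x"
        unfolding supported_def by blast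
      have Zc: "ordLess2 (card_of (e ` S)) r" using ordLeq_ordLess_trans[OF card_of_image Sc] .
      have "is_meet_in (e ` S) (dom g) x" using is_meetD1[OF Sm] is_meetD2[OF Sm] x unfolding is_meet_in_def by blast
      have "is_meet ((the \<circ> g) ` (e ` S)) (the (g x))"
      proof -
        have "e ` S \<subseteq> dom g" using g(1) by blast
        with Zc \<open>is_meet_in (e ` S) (dom g) x\<close> show ?thesis
          using g(2) unfolding meet_preserving_def by (elim allE impE) (intro conjI)
      qed
      moreover have "(the \<circ> g) ` (e ` S) = f ` S" unfolding image_image using g(3) by simp
      ultimately have gm: "is_meet (f ` S) (the (g x))" by simp
      have xd: "x \<in> dom (ext_map e f)" using x by blast
      have "S \<subseteq> f -` {the (ext_map e f x)..}"
      proof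
        fix s assume "s \<in> S"
        then have "x \<le> e s" using is_meetD1[OF Sm] by blast
        then have "f s \<in> f ` (e -` {x..})" by auto
        then have "the (ext_map e f x) \<le> f s" using is_meetD1[OF ext_map_dom[OF xd]] by blast
        then show "s \<in> f -` {the (ext_map e f x)..}" by simp
      qed
      then obtain qS xS where q: "is_meet (f ` S) qS" "is_meet (f ` (e -` {xS..})) qS"
         "up_set S \<subseteq> e -` {xS..}"
        using cont Sc unfolding continuous_wrt_def by blast
      have "\<forall>s\<in>S. xS \<le> e s" using q(3) unfolding up_set_def by auto
      then have xx: "xS \<le> x" using is_meetD2[OF Sm] by blast
      have mS: "\<forall>s\<in>S. x \<le> e s" using is_meetD1[OF Sm] by blast
      have "is_meet (f ` (e -` {x..})) qS"
      proof (rule is_meetI)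
        show "\<forall>s\<in>f ` e -` {x..}. qS \<le> s" using q(2) xx by (auto intro: is_meetD1 order_trans)
        show "l \<le> qS" if "\<forall>s\<in>f ` e -` {x..}. l \<le> s" for l
          using that mS by (intro is_meetD2[OF q(1)]) blast
      qed
      then have "ext_map e f x = Some qS" by (rule ext_map_Some)
      moreover have "g x = Some qS" using meet_unique[OF gm q(1)] x by force
      ultimately show ?thesis by simp
    qed
    show "(\<forall>Z b. Z \<subseteq> dom (ext_map e f) \<and> ordLess2 (card_of Z) r \<and> (\<exists>m. is_meet Z m)
                  \<and> is_meet_in Z (dom (ext_map e f)) b \<longrightarrow> is_meet Z b)
         \<and> meet_preserving r (ext_map e f)
         \<and> (\<forall>g :: 'x \<Rightarrow> 'q option. range e \<subseteq> dom g \<and> meet_preserving r g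
                \<and> (\<forall>p. g (e p) = Some (f p)) \<longrightarrow>
                (\<forall>x \<in> dom (ext_map e f) \<inter> dom g. g x = ext_map e f x))"
      using A B C by blast
  qed
  show ?thesis using P1 P2 P3 P4 by blast
qed

end
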